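(* Let $p\ge2$ be a fixed integer and let $\mathcal P$ denote the set of integral partitions all of whose entries are powers $p^i$ ($i\ge0$) of $p$. Let $\lambda,\mu\in\mathcal P$. If $\lambda$ stably embeds into $\mu$, then there exists $\nu\in\mathcal P$ such that $\lambda\times\nu\hookrightarrow\mu\times\nu$.
   Context: An integral partition is a finite nonincreasing sequence of positive integers. The product $\lambda\times\nu$ is the partition of all products $\lambda_i\nu_j$, reordered nonincreasingly. $\lambda=[\lambda_1,\ldots,\lambda_m]$ embeds into $\mu=[\mu_1,\ldots,\mu_n]$, written $\lambda\hookrightarrow\mu$, if there is a map $\varphi:\{1,\ldots,m\}\to\{1,\ldots,n\}$ with $\sum_{i\in\varphi^{-1}(j)}\lambda_i\le\mu_j$ for all $j$. $\lambda$ stably embeds into $\mu$ if there exists an integral partition $\nu$ (arbitrary) with $\lambda\times\nu\hookrightarrow\mu\times\nu$. *)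

theory Defs
  imports Main
begin

definition is_partition :: "nat list \<Rightarrow> bool" where
  "is_partition xs \<longleftrightarrow> (\<forall>x\<in>set xs. 0 < x) \<and> sorted_wrt (\<ge>) xs"

definition pprod :: "nat list \<Rightarrow> nat list \<Rightarrow> nat list" where
  "pprod l n = rev (sort [a * b. a \<leftarrow> l, b \<leftarrow> n])"

text \<open>Embedding, with 0-based indices.\<close>
definition embeds :: "nat list \<Rightarrow> nat list \<Rightarrow> bool" where
  "embeds l m \<longleftrightarrow> (\<exists>\<phi> :: nat \<Rightarrow> nat.
      (\<forall>i < length l. \<phi> i < length m) \<and>
      (\<forall>j < length m. (\<Sum>i\<in>{i. i < length l \<and> \<phi> i = j}. l ! i) \<le> m ! j))"

definition stably_embeds :: "nat list \<Rightarrow> nat list \<Rightarrow> bool" where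
  "stably_embeds l m \<longleftrightarrow>
     (\<exists>\<nu>. is_partition \<nu> \<and> \<nu> \<noteq> [] \<and> embeds (pprod l \<nu>) (pprod m \<nu>))"

definition pow_partition :: "nat \<Rightarrow> nat list \<Rightarrow> bool" where
  "pow_partition p l \<longleftrightarrow> is_partition l \<and> (\<forall>x\<in>set l. \<exists>i::nat. x = p ^ i)"

end

theory Submission imports Defs "HOL-Library.Multiset" begin

function lg :: "nat \<Rightarrow> nat \<Rightarrow> nat" where
 "lg p x = (if p \<le> 1 \<or> x < p then 0 else Suc (lg p (x div p)))"
  by auto
termination by (relation "measure (\<lambda>(p,x). x)") auto

declare lg.simps[simp del]

lemma lg_bounds: assumes "p \<ge> 2" "x > 0" shows "p ^ lg p x \<le> x \<and> x < p ^ Suc (lg p x)"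
  using assms
proof (induction p x rule: lg.induct)
  case (1 p x)
  show ?case
  proof (cases "x < p")
    case True then show ?thesis using 1 by (simp add: lg.simps)
  next
    case False
    then have "x div p > 0" using 1 by (simp add: div_greater_zero_iff)
    with 1 False have IH: "p ^ lg p (x div p) \<le> x div p \<and> x div p < p ^ Suc (lg p (x div p))" by auto
    have e: "lg p x = Suc (lg p (x div p))" using False 1 by (simp add: lg.simps)
    have a: "p * (x div p) \<le> x" by simp
    have x1: "x = p * (x div p) + x mod p" by simp
    have x2: "x mod p < p" using 1 by simp
    have b: "x < p * (x div p) + p" using x1 x2 by linarith
    have c1: "p * p ^ lg p (x div p) \<le> p * (x div p)" using IH by simp
    have c2: "x div p + 1 \<le> p ^ Suc (lg p (x div p))" using IH by simp
    have c3: "p * (x div p + 1) \<le> p * p ^ Suc (lg p (x div p))" using mult_le_mono2[OF c2] by blast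
    have c4: "p * (x div p) + p = p * (x div p + 1)" by (simp add: algebra_simps)
    show ?thesis unfolding e power_Suc using a b c1 c3[unfolded power_Suc] c4 by linarith
  qed
qed

lemma lg_unique: assumes "p \<ge> 2" "p ^ k \<le> x" "x < p ^ Suc k" shows "lg p x = k"
proof -
  have "p ^ k > 0" using assms(1) by simp
  then have x: "x > 0" using assms(2) by linarith
  note B = lg_bounds[OF assms(1) x]
  have p1: "1 < p" using assms(1) by simp
  have "p ^ k < p ^ Suc (lg p x)" using B assms(2) by linarith
  then have "k < Suc (lg p x)" using power_less_imp_less_exp[OF p1] by blast
  moreover have "p ^ lg p x < p ^ Suc k" using B assms(3) by linarith
  then have "lg p x < Suc k" using power_less_imp_less_exp[OF p1] by blast
  ultimately show ?thesis by simp
qed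

lemma lg_mult_pow: assumes "p \<ge> 2" "y > 0" shows "lg p (p ^ k * y) = k + lg p y"
proof -
  note B = lg_bounds[OF assms]
  show ?thesis
    apply (rule lg_unique[OF assms(1)])
    using B assms by (auto simp: power_add)
qed

lemma lg_le_self: "lg p x \<le> x"
proof (induction p x rule: lg.induct)
  case (1 p x)
  show ?case
  proof (cases "p \<le> 1 \<or> x < p")
    case True then show ?thesis by (simp add: lg.simps)
  next
    case False
    then have e: "lg p x = Suc (lg p (x div p))" by (simp add: lg.simps)
    have "x div p < x" using False by (intro div_less_dividend) auto
    then show ?thesis using e 1 False by linarith
  qed
qed

lemma lg_mono: assumes "p \<ge> 2" "x \<le> y" shows "lg p x \<le> lg p y"
proof (cases "x = 0")
  case True then show ?thesis by (simp add: lg.simps)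
next
  case False
  have B1: "p ^ lg p x \<le> x" using lg_bounds[OF assms(1)] False by auto
  have B2: "y < p ^ Suc (lg p y)" using lg_bounds[OF assms(1)] False assms(2) by auto
  have "p ^ lg p x < p ^ Suc (lg p y)" using B1 B2 assms(2) by linarith
  moreover have "1 < p" using assms(1) by simp
  ultimately have "lg p x < Suc (lg p y)" using power_less_imp_less_exp by blast
  then show ?thesis by simp
qed


definition embM :: "nat multiset \<Rightarrow> nat multiset \<Rightarrow> bool" where
 "embM X Y \<longleftrightarrow> (\<exists>F :: (nat \<times> nat multiset) multiset. image_mset fst F = Y \<and>
     sum_mset (image_mset snd F) = X \<and> (\<forall>z\<in>#F. sum_mset (snd z) \<le> fst z))"

lemma embM_empty: "embM {#} {#}"
  unfolding embM_def by (rule exI[of _ "{#}"]) simp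

lemma embM_add: "embM X1 Y1 \<Longrightarrow> embM X2 Y2 \<Longrightarrow> embM (X1 + X2) (Y1 + Y2)"
  unfolding embM_def
proof (elim exE conjE)
  fix F1 F2 assume "image_mset fst F1 = Y1" "sum_mset (image_mset snd F1) = X1" "\<forall>z\<in>#F1. sum_mset (snd z) \<le> fst z"
    "image_mset fst F2 = Y2" "sum_mset (image_mset snd F2) = X2" "\<forall>z\<in>#F2. sum_mset (snd z) \<le> fst z"
  then show "\<exists>F. image_mset fst F = Y1 + Y2 \<and> sum_mset (image_mset snd F) = X1 + X2 \<and> (\<forall>z\<in>#F. sum_mset (snd z) \<le> fst z)"
    by (intro exI[of _ "F1 + F2"]) auto
qed

lemma embM_single: "sum_mset S \<le> c \<Longrightarrow> embM S {#c#}"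
  unfolding embM_def by (rule exI[of _ "{#(c,S)#}"]) simp

lemma embM_sum: "(\<forall>z\<in>#F. embM (f z) (g z)) \<Longrightarrow> embM (\<Sum>z\<in>#F. f z) (\<Sum>z\<in>#F. g z)"
  by (induction F) (auto intro: embM_add embM_empty)

lemma embM_zero_bins: "embM {#} (replicate_mset n c)"
proof (induction n)
  case 0 then show ?case using embM_empty by simp
next
  case (Suc n)
  from embM_add[OF embM_single[of "{#}" c] Suc] show ?case by simp
qed

lemma subsum_exists:
  fixes p :: nat
  assumes "p \<ge> 2"
  shows "(\<forall>x\<in>#S. \<exists>k. x = p ^ k) \<Longrightarrow> (\<forall>x\<in>#S. x dvd t) \<Longrightarrow> t \<le> sum_mset S \<Longrightarrow> \<exists>S1. S1 \<subseteq># S \<and> sum_mset S1 = t"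
proof (induction S arbitrary: t rule: multiset_induct_max)
  case empty then show ?case by auto
next
  case (add x M)
  show ?case
  proof (cases "t \<ge> x")
    case True
    have dv: "\<forall>y\<in>#M. y dvd x"
    proof
      fix y assume y: "y \<in># M"
      obtain i j where "y = p ^ i" "x = p ^ j" using add.prems y by auto
      moreover have "y \<le> x" using add.hyps y by auto
      ultimately have "i \<le> j" using assms by (simp add: power_increasing_iff)
      then show "y dvd x" using \<open>y = p ^ i\<close> \<open>x = p ^ j\<close> by (simp add: le_imp_power_dvd)
    qed
    have "\<forall>y\<in>#M. y dvd (t - x)" using dv add.prems by (simp add: dvd_diff_nat)
    moreover have "t - x \<le> sum_mset M" using add.prems by simp
    ultimately obtain S1 where "S1 \<subseteq># M" "sum_mset S1 = t - x" using add.IH[of "t - x"] add.prems by auto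
    then show ?thesis using True by (intro exI[of _ "add_mset x S1"]) auto
  next
    case False
    have "x dvd t" using add.prems by simp
    then have "t = 0" using False by (metis dvd_imp_le not_le neq0_conv)
    then show ?thesis by (intro exI[of _ "{#}"]) auto
  qed
qed

lemma packing:
  fixes p :: nat
  assumes "p \<ge> 2"
  shows "(\<forall>x\<in>#S. \<exists>k\<le>e. x = p ^ k) \<Longrightarrow> sum_mset S \<le> n * p ^ e \<Longrightarrow> embM S (replicate_mset n (p ^ e))"
proof (induction n arbitrary: S)
  case 0
  then have z: "\<forall>x\<in>#S. x = 0" by simp
  have nz: "\<forall>x\<in>#S. x \<noteq> 0" using 0 assms by fastforce
  have "S = {#}" using z nz by (metis multiset_nonemptyE)
  then show ?case using embM_empty by simp
next
  case (Suc n)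
  show ?case
  proof (cases "sum_mset S \<le> p ^ e")
    case True
    have "embM (S + {#}) ({#p ^ e#} + replicate_mset n (p ^ e))"
      by (rule embM_add[OF embM_single[OF True] embM_zero_bins])
    then show ?thesis by simp
  next
    case False
    have "\<forall>x\<in>#S. x dvd p ^ e" using Suc.prems by (auto simp: le_imp_power_dvd)
    moreover have "\<forall>x\<in>#S. \<exists>k. x = p ^ k" using Suc.prems by auto
    ultimately obtain S1 where S1: "S1 \<subseteq># S" "sum_mset S1 = p ^ e"
      using subsum_exists[OF assms, of S "p ^ e"] False by auto
    have "sum_mset (S - S1) \<le> n * p ^ e"
      using Suc.prems(2) S1 by (metis add_diff_cancel_left' le_diff_conv2 mult_Suc sum_mset.union subset_mset.add_diff_inverse add.commute le_add1 diff_le_mono)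
    moreover have "\<forall>x\<in>#S - S1. \<exists>k\<le>e. x = p ^ k" using Suc.prems(1) by (meson in_diffD)
    ultimately have "embM (S - S1) (replicate_mset n (p ^ e))" using Suc.IH by auto
    from embM_add[OF embM_single[of S1 "p ^ e"] this] S1
    show ?thesis by (simp add: subset_mset.add_diff_inverse)
  qed
qed


definition Tm :: "nat \<Rightarrow> nat \<Rightarrow> nat \<Rightarrow> nat multiset" where
  "Tm p M x = replicate_mset (x * p ^ (M - lg p x)) (p ^ lg p x)"

lemma sum_Tm: "lg p x \<le> M \<Longrightarrow> sum_mset (Tm p M x) = x * p ^ M"
  unfolding Tm_def by (simp add: sum_mset_replicate_mset mult.assoc power_add[symmetric])

lemma sum_image_sum: "sum_mset (image_mset f (sum_mset Ms)) = (\<Sum>S\<in>#Ms. sum_mset (image_mset f S))"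
  by (induction Ms) auto

lemma mem_le_sum: "(x::nat) \<in># S \<Longrightarrow> x \<le> sum_mset S"
proof -
  assume "x \<in># S"
  then obtain S' where "S = add_mset x S'" by (metis multi_member_split)
  then show ?thesis by simp
qed

lemma core:
  fixes p :: nat
  assumes p: "p \<ge> 2" and E: "embM X Y" and hX: "\<forall>x\<in>#X. lg p x \<le> M" and hY: "\<forall>y\<in>#Y. lg p y \<le> M"
  shows "embM (\<Sum>x\<in>#X. Tm p M x) (\<Sum>y\<in>#Y. Tm p M y)"
proof -
  obtain F where F1: "image_mset fst F = Y" and F2: "sum_mset (image_mset snd F) = X"
    and F3: "\<forall>z\<in>#F. sum_mset (snd z) \<le> fst z" using E unfolding embM_def by blast
  have each: "embM (\<Sum>x\<in>#snd z. Tm p M x) (Tm p M (fst z))" if z: "z \<in># F" for z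
  proof -
    obtain c S where zc: "z = (c, S)" by force
    have cS: "sum_mset S \<le> c" using F3 z zc by auto
    have "fst z \<in># image_mset fst F" using z by simp
    then have "c \<in># Y" using F1 zc by simp
    then have lc: "lg p c \<le> M" using hY by blast
    have "S \<in># image_mset snd F" using z zc by force
    then obtain R where "image_mset snd F = add_mset S R" by (metis multi_member_split)
    then have "X = S + sum_mset R" using F2 by simp
    then have sub: "S \<subseteq># X" by simp
    have lS: "\<forall>x\<in>#S. lg p x \<le> M" using hX mset_subset_eqD[OF sub] by blast
    have items: "\<forall>w\<in>#(\<Sum>x\<in>#S. Tm p M x). \<exists>k\<le>lg p c. w = p ^ k"
    proof
      fix w assume "w \<in># (\<Sum>x\<in>#S. Tm p M x)"
      then obtain T where T: "T \<in># image_mset (Tm p M) S" "w \<in># T" by (auto simp only: in_Union_mset_iff)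
      then obtain x where x: "x \<in># S" "w \<in># Tm p M x" by auto
      then have "w = p ^ lg p x" unfolding Tm_def by (simp split: if_splits)
      moreover have "lg p x \<le> lg p c" using lg_mono[OF p] mem_le_sum[OF x(1)] cS by (meson le_trans)
      ultimately show "\<exists>k\<le>lg p c. w = p ^ k" by blast
    qed
    have "sum_mset (\<Sum>x\<in>#S. Tm p M x) = (\<Sum>x\<in>#S. x * p ^ M)"
      using lS by (induction S) (auto simp: sum_Tm)
    also have "\<dots> = sum_mset S * p ^ M" by (induction S) (auto simp: algebra_simps)
    also have "\<dots> \<le> c * p ^ M" using cS by simp
    also have "\<dots> = (c * p ^ (M - lg p c)) * p ^ lg p c" using lc by (simp add: mult.assoc power_add[symmetric])
    finally have "embM (\<Sum>x\<in>#S. Tm p M x) (replicate_mset (c * p ^ (M - lg p c)) (p ^ lg p c))"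
      using packing[OF p items] by blast
    then show ?thesis using zc unfolding Tm_def by simp
  qed
  have "embM (\<Sum>z\<in>#F. \<Sum>x\<in>#snd z. Tm p M x) (\<Sum>z\<in>#F. Tm p M (fst z))"
    by (rule embM_sum) (use each in blast)
  moreover have "(\<Sum>z\<in>#F. Tm p M (fst z)) = (\<Sum>y\<in>#Y. Tm p M y)"
    unfolding F1[symmetric] by (simp add: multiset.map_comp comp_def)
  moreover have "(\<Sum>z\<in>#F. \<Sum>x\<in>#snd z. Tm p M x) = (\<Sum>x\<in>#X. Tm p M x)"
    unfolding F2[symmetric] sum_image_sum by (simp add: multiset.map_comp comp_def)
  ultimately show ?thesis by simp
qed


lemma split_img:
  "finite I \<Longrightarrow> image_mset a (mset_set I) = S + R \<Longrightarrow>
   \<exists>K\<subseteq>I. image_mset a (mset_set K) = S \<and> image_mset a (mset_set (I - K)) = R"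
proof (induction I arbitrary: S R rule: finite_induct)
  case empty then show ?case by auto
next
  case (insert i I0)
  have eq: "add_mset (a i) (image_mset a (mset_set I0)) = S + R" using insert by simp
  show ?case
  proof (cases "a i \<in># S")
    case True
    then obtain S0 where S0: "S = add_mset (a i) S0" by (metis multi_member_split)
    then have "image_mset a (mset_set I0) = S0 + R" using eq by simp
    then obtain K0 where K0: "K0 \<subseteq> I0" "image_mset a (mset_set K0) = S0" "image_mset a (mset_set (I0 - K0)) = R"
      using insert.IH by blast
    have fK0: "finite K0" using K0(1) insert.hyps(1) finite_subset by blast
    have "i \<notin> K0" using K0(1) insert.hyps(2) by blast
    moreover have "insert i I0 - insert i K0 = I0 - K0" using insert.hyps(2) by blast
    ultimately show ?thesis using K0 S0 fK0 by (intro exI[of _ "insert i K0"]) auto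
  next
    case False
    then have "a i \<in># R" using eq by (metis add_mset_add_single union_iff union_single_eq_member)
    then obtain R0 where R0: "R = add_mset (a i) R0" by (metis multi_member_split)
    then have "image_mset a (mset_set I0) = S + R0" using eq by simp
    then obtain K0 where K0: "K0 \<subseteq> I0" "image_mset a (mset_set K0) = S" "image_mset a (mset_set (I0 - K0)) = R0"
      using insert.IH by blast
    have "insert i I0 - K0 = insert i (I0 - K0)" using K0(1) insert.hyps(2) by blast
    moreover have "i \<notin> I0 - K0" using insert.hyps(2) by blast
    ultimately show ?thesis using K0 R0 insert.hyps(1) by (intro exI[of _ K0]) auto
  qed
qed

lemma embI_to_embM:
  "finite J \<Longrightarrow> finite I \<Longrightarrow> (\<forall>i\<in>I. \<phi> i \<in> J) \<Longrightarrow> (\<forall>j\<in>J. sum a {i\<in>I. \<phi> i = j} \<le> b j) \<Longrightarrow>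
   embM (image_mset a (mset_set I)) (image_mset b (mset_set J))"
proof (induction J arbitrary: I rule: finite_induct)
  case empty
  then have "I = {}" by auto
  then show ?case using embM_empty by simp
next
  case (insert j J)
  define K where "K = {i\<in>I. \<phi> i = j}"
  have fK: "finite K" "finite (I - K)" using insert.prems(1) K_def by auto
  have "embM (image_mset a (mset_set (I - K))) (image_mset b (mset_set J))"
  proof (rule insert.IH[OF fK(2)])
    show "\<forall>i\<in>I - K. \<phi> i \<in> J" using insert.prems(2) K_def by auto
    show "\<forall>j'\<in>J. sum a {i \<in> I - K. \<phi> i = j'} \<le> b j'"
    proof
      fix j' assume j': "j' \<in> J"
      then have "{i \<in> I - K. \<phi> i = j'} = {i \<in> I. \<phi> i = j'}" using insert.hyps(2) K_def by auto
      then show "sum a {i \<in> I - K. \<phi> i = j'} \<le> b j'" using insert.prems(3) j' by auto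
    qed
  qed
  moreover have "embM (image_mset a (mset_set K)) {#b j#}"
    using insert.prems(3) K_def by (intro embM_single) (simp add: sum_unfold_sum_mset)
  ultimately have "embM (image_mset a (mset_set K) + image_mset a (mset_set (I - K))) ({#b j#} + image_mset b (mset_set J))"
    by (rule embM_add[rotated])
  moreover have "mset_set I = mset_set K + mset_set (I - K)"
    using fK K_def mset_set_Union[of K "I - K"] by (metis Diff_disjoint Diff_partition mem_Collect_eq subsetI)
  ultimately show ?case using insert.hyps by simp
qed

lemma embM_to_embI:
  "finite J \<Longrightarrow> finite I \<Longrightarrow> embM (image_mset a (mset_set I)) (image_mset b (mset_set J)) \<Longrightarrow>
   \<exists>\<phi>. (\<forall>i\<in>I. \<phi> i \<in> J) \<and> (\<forall>j\<in>J. sum a {i\<in>I. \<phi> i = j} \<le> b j)"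
proof (induction J arbitrary: I rule: finite_induct)
  case empty
  then obtain F where "image_mset fst F = {#}" "sum_mset (image_mset snd F) = image_mset a (mset_set I)"
    unfolding embM_def by auto
  then have "mset_set I = {#}" by simp
  then have "I = {}" using empty.prems(1) by (metis mset_set_eq_iff mset_set.empty finite.emptyI)
  then show ?case by auto
next
  case (insert j J)
  obtain F where F1: "image_mset fst F = image_mset b (mset_set (insert j J))"
    and F2: "sum_mset (image_mset snd F) = image_mset a (mset_set I)"
    and F3: "\<forall>z\<in>#F. sum_mset (snd z) \<le> fst z" using insert.prems(2) unfolding embM_def by blast
  have "b j \<in># image_mset fst F" using F1 insert.hyps by simp
  then obtain z where z: "z \<in># F" "fst z = b j" by auto
  define F' where "F' = F - {#z#}"
  have FF: "F = add_mset z F'" using z F'_def by simp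
  have F1': "image_mset fst F' = image_mset b (mset_set J)" using F1 FF z insert.hyps by simp
  have "image_mset a (mset_set I) = snd z + sum_mset (image_mset snd F')" using F2 FF by simp
  then obtain K where K: "K \<subseteq> I" "image_mset a (mset_set K) = snd z"
     "image_mset a (mset_set (I - K)) = sum_mset (image_mset snd F')"
    using split_img[OF insert.prems(1)] by blast
  have "embM (image_mset a (mset_set (I - K))) (image_mset b (mset_set J))"
    unfolding embM_def using F1' K(3) F3 FF by (intro exI[of _ F']) auto
  then obtain \<psi> where psi: "\<forall>i\<in>I - K. \<psi> i \<in> J" "\<forall>j\<in>J. sum a {i\<in>I - K. \<psi> i = j} \<le> b j"
    using insert.IH insert.prems(1) by blast
  define \<phi> where "\<phi> i = (if i \<in> K then j else \<psi> i)" for i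
  show ?case
  proof (intro exI[of _ \<phi>] conjI ballI)
    fix i assume "i \<in> I" then show "\<phi> i \<in> insert j J" using psi \<phi>_def by auto
  next
    fix j' assume j': "j' \<in> insert j J"
    show "sum a {i \<in> I. \<phi> i = j'} \<le> b j'"
    proof (cases "j' = j")
      case True
      then have "{i \<in> I. \<phi> i = j'} = K" using K(1) psi(1) insert.hyps(2) \<phi>_def by auto
      moreover have "sum a K = sum_mset (snd z)" using K(2) by (simp add: sum_unfold_sum_mset)
      ultimately show ?thesis using F3 z True by auto
    next
      case False
      then have "{i \<in> I. \<phi> i = j'} = {i\<in>I - K. \<psi> i = j'}" using \<phi>_def by auto
      then show ?thesis using psi(2) j' False by auto
    qed
  qed
qed

lemma mset_nth: "mset l = image_mset (nth l) (mset_set {..<length l})"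
proof -
  have "mset l = mset (map (nth l) [0..<length l])" by (simp add: map_nth)
  also have "\<dots> = image_mset (nth l) (mset_set {..<length l})" by (simp add: lessThan_atLeast0)
  finally show ?thesis .
qed

lemma embeds_iff: "embeds l m \<longleftrightarrow> embM (mset l) (mset m)"
proof
  assume "embeds l m"
  then obtain \<phi> where h: "\<forall>i<length l. \<phi> i < length m"
      "\<forall>j<length m. (\<Sum>i\<in>{i. i < length l \<and> \<phi> i = j}. l ! i) \<le> m ! j"
    unfolding embeds_def by blast
  have "embM (image_mset (nth l) (mset_set {..<length l})) (image_mset (nth m) (mset_set {..<length m}))"
    by (rule embI_to_embM) (use h in auto)
  then show "embM (mset l) (mset m)" by (simp add: mset_nth[symmetric])
next
  assume "embM (mset l) (mset m)"
  then have "embM (image_mset (nth l) (mset_set {..<length l})) (image_mset (nth m) (mset_set {..<length m}))"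
    by (simp add: mset_nth[symmetric])
  from embM_to_embI[OF _ _ this] obtain \<phi> where
    h: "\<forall>i\<in>{..<length l}. \<phi> i \<in> {..<length m}" "\<forall>j\<in>{..<length m}. sum (nth l) {i\<in>{..<length l}. \<phi> i = j} \<le> m ! j"
    by auto
  then show "embeds l m" unfolding embeds_def by (intro exI[of _ \<phi>]) auto
qed

lemma mset_pprod: "mset (pprod l n) = (\<Sum>a\<in>#mset l. image_mset ((*) a) (mset n))"
  unfolding pprod_def by (induction l) auto

lemma mem_pprod: "a \<in> set l \<Longrightarrow> b \<in> set n \<Longrightarrow> a * b \<in> set (pprod l n)"
  unfolding pprod_def by auto

lemma T_mult:
  assumes p: "p \<ge> 2" and a: "a = p ^ k" and l: "lg p (a * y) \<le> M"
  shows "Tm p M (a * y) = image_mset ((*) a) (Tm p M y)"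
proof (cases "y = 0")
  case True then show ?thesis by (simp add: Tm_def)
next
  case False
  have e: "lg p (a * y) = k + lg p y" using lg_mult_pow[OF p] False a by simp
  have "p ^ k * p ^ (M - (k + lg p y)) = p ^ (M - lg p y)"
    using l e by (simp add: power_add[symmetric])
  then have cnt: "a * y * p ^ (M - lg p (a * y)) = y * p ^ (M - lg p y)"
    using e a by (metis mult.assoc mult.commute)
  have "Tm p M (a * y) = replicate_mset (a * y * p ^ (M - lg p (a * y))) (p ^ lg p (a * y))"
    by (simp add: Tm_def)
  also have "\<dots> = replicate_mset (y * p ^ (M - lg p y)) (a * p ^ lg p y)"
    unfolding cnt using e a by (simp add: power_add)
  also have "\<dots> = image_mset ((*) a) (Tm p M y)" by (simp add: Tm_def)
  finally show ?thesis .
qed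

lemma sum_T_prod:
  assumes p: "p \<ge> 2"
  shows "(\<forall>a\<in>#L. \<exists>k. a = p ^ k) \<Longrightarrow> (\<forall>a\<in>#L. \<forall>y\<in>#N. lg p (a * y) \<le> M) \<Longrightarrow>
    (\<Sum>x\<in>#(\<Sum>a\<in>#L. image_mset ((*) a) N). Tm p M x) = (\<Sum>a\<in>#L. image_mset ((*) a) (\<Sum>y\<in>#N. Tm p M y))"
proof (induction L)
  case empty then show ?case by simp
next
  case (add a L)
  obtain k where k: "a = p ^ k" using add.prems by auto
  have "(\<Sum>y\<in>#N. Tm p M (a * y)) = image_mset ((*) a) (\<Sum>y\<in>#N. Tm p M y)"
    using add.prems(2)
  proof (induction N)
    case empty then show ?case by simp
  next
    case (add y N)
    then show ?case using T_mult[OF p k, of y M] by simp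
  qed
  then show ?case using add by (simp add: multiset.map_comp comp_def)
qed

theorem theorem3p3:
  fixes p :: nat and lam mu :: "nat list"
  assumes "p \<ge> 2"
    and "pow_partition p lam" and "pow_partition p mu"
    and "stably_embeds lam mu"
  shows "\<exists>\<nu>. pow_partition p \<nu> \<and> \<nu> \<noteq> [] \<and> embeds (pprod lam \<nu>) (pprod mu \<nu>)"
proof -
  note p = assms(1)
  obtain \<nu> where nu: "is_partition \<nu>" "\<nu> \<noteq> []" "embeds (pprod lam \<nu>) (pprod mu \<nu>)"
    using assms(4) unfolding stably_embeds_def by blast
  define M where "M = sum_list (pprod lam \<nu>) + sum_list (pprod mu \<nu>)"
  define L where "L = concat (map (\<lambda>y. replicate (y * p ^ (M - lg p y)) (p ^ lg p y)) \<nu>)"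
  define \<nu>' where "\<nu>' = rev (sort L)"
  have msetL: "mset L = (\<Sum>y\<in>#mset \<nu>. Tm p M y)"
    unfolding L_def by (induction \<nu>) (auto simp: Tm_def)
  have mset\<nu>': "mset \<nu>' = (\<Sum>y\<in>#mset \<nu>. Tm p M y)" using msetL \<nu>'_def by simp
  have setL: "x \<in> set L \<Longrightarrow> \<exists>k. x = p ^ k" for x unfolding L_def by auto
  have hX: "\<forall>x\<in>#mset (pprod lam \<nu>). lg p x \<le> M"
  proof
    fix x assume "x \<in># mset (pprod lam \<nu>)"
    then have "x \<le> sum_list (pprod lam \<nu>)" by (simp add: member_le_sum_list)
    then show "lg p x \<le> M" using lg_le_self[of p x] M_def by linarith
  qed
  have hY: "\<forall>x\<in>#mset (pprod mu \<nu>). lg p x \<le> M"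
  proof
    fix x assume "x \<in># mset (pprod mu \<nu>)"
    then have "x \<le> sum_list (pprod mu \<nu>)" by (simp add: member_le_sum_list)
    then show "lg p x \<le> M" using lg_le_self[of p x] M_def by linarith
  qed
  have E: "embM (mset (pprod lam \<nu>)) (mset (pprod mu \<nu>))" using nu(3) embeds_iff by blast
  have C: "embM (\<Sum>x\<in>#mset (pprod lam \<nu>). Tm p M x) (\<Sum>x\<in>#mset (pprod mu \<nu>). Tm p M x)"
    by (rule core[OF p E hX hY])
  have lamp: "\<forall>a\<in>#mset lam. \<exists>k. a = p ^ k" using assms(2) unfolding pow_partition_def by auto
  have mup: "\<forall>a\<in>#mset mu. \<exists>k. a = p ^ k" using assms(3) unfolding pow_partition_def by auto
  have lamM: "\<forall>a\<in>#mset lam. \<forall>y\<in>#mset \<nu>. lg p (a * y) \<le> M"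
    using hX mem_pprod by (metis set_mset_mset)
  have muM: "\<forall>a\<in>#mset mu. \<forall>y\<in>#mset \<nu>. lg p (a * y) \<le> M"
    using hY mem_pprod by (metis set_mset_mset)
  have "(\<Sum>x\<in>#mset (pprod lam \<nu>). Tm p M x) = mset (pprod lam \<nu>')"
    unfolding mset_pprod mset\<nu>' using sum_T_prod[OF p lamp lamM] by simp
  moreover have "(\<Sum>x\<in>#mset (pprod mu \<nu>). Tm p M x) = mset (pprod mu \<nu>')"
    unfolding mset_pprod mset\<nu>' using sum_T_prod[OF p mup muM] by simp
  ultimately have emb: "embeds (pprod lam \<nu>') (pprod mu \<nu>')" using C embeds_iff by simp
  have pos: "x \<in> set L \<Longrightarrow> x > 0" for x
  proof -
    assume "x \<in> set L"
    then obtain k where "x = p ^ k" using setL by blast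
    then show "x > 0" using p by simp
  qed
  have pp: "pow_partition p \<nu>'"
    unfolding pow_partition_def is_partition_def \<nu>'_def
    using setL pos by (auto simp: sorted_wrt_rev)
  obtain y ys where yy: "\<nu> = y # ys" using nu(2) by (cases \<nu>) auto
  have "y > 0" using nu(1) yy unfolding is_partition_def by auto
  then have "p ^ lg p y \<in> set L" unfolding L_def yy using p by simp
  then have "p ^ lg p y \<in> set \<nu>'" unfolding \<nu>'_def by simp
  then have "\<nu>' \<noteq> []" by auto
  then show ?thesis using pp emb by blast
qed

end
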